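(* Let $q$ be a prime power, $m\ge1$, $1\le k\le n$, $g_1,\dots,g_n\in\mathbb{F}_{q^m}$ linearly independent over $\mathbb{F}_q$, $\mathbf g=(g_1,\dots,g_n)$, $\mathbf r\in\mathbb{F}_{q^m}^n$. Then Algorithm 2 (described in the context) produces a minimal basis $\{b^{(1)},b^{(2)}\}$ of the interpolation module $\mathfrak M(\mathbf r)$ with respect to the $(0,k-1)$-weighted term-over-position order. Moreover, $\mathrm{lpos}(b^{(1)})=1$ and $\mathrm{lpos}(b^{(2)})=2$.
   Context: Write $[i]:=q^i$. A $q$-linearized polynomial is $f(x)=\sum_{i=0}^{d}a_ix^{[i]}$, $a_i\in\mathbb{F}_{q^m}$; if $a_d\ne0$, $d=\mathrm{qdeg}(f)$ ($\mathrm{qdeg}(0)=-\infty$). $\mathcal{L}_q(x,q^m)$ is the ring of these under addition and composition $\circ$. $\Pi_{\mathbf g}(x)=\prod_{u\in\langle g_1,\dots,g_n\rangle}(x-u)$ ($\mathbb{F}_q$-span), of $q$-degree $n$ in $\mathcal{L}_q(x,q^m)$. For $\mathbf r=(r_1,\dots,r_n)$, $\Lambda_{\mathbf g,\mathbf r}(x)=\sum_{i=1}^n(-1)^{n-i}r_i\det(\mathfrak D_i(\mathbf g,x))/\det(M_n(g_1,\dots,g_n))$ ($M_n(v_1,\dots,v_s)$ the $n\times s$ matrix with $(j,l)$ entry $v_l^{[j-1]}$; $\mathfrak D_i(\mathbf g,x)$ is $M_n(g_1,\dots,g_n,x)$ without the $i$-th column), in $\mathcal{L}_q(x,q^m)$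 with $\Lambda_{\mathbf g,\mathbf r}(g_i)=r_i$. $\mathcal{L}_q(x,q^m)^2$ is a left module via $h\circ[f_1\ f_2]=[h\circ f_1\ \ h\circ f_2]$; $\mathfrak M(\mathbf r)$ is the set of all $\beta\circ[\Pi_{\mathbf g}\ \ 0]+\gamma\circ[-\Lambda_{\mathbf g,\mathbf r}\ \ x]$, $\beta,\gamma\in\mathcal{L}_q(x,q^m)$. Monomials are $x^{[i]}e_j$, $j\in\{1,2\}$. $(0,k-1)$-weighted term-over-position order: with $w_1=0$, $w_2=k-1$, $x^{[i_1]}e_{j_1}<x^{[i_2]}e_{j_2}$ iff $i_1+w_{j_1}<i_2+w_{j_2}$ or ($i_1+w_{j_1}=i_2+w_{j_2}$ and $j_1<j_2$). $\mathrm{lm}(f)$ is the largest monomial of nonzero $f$, $\mathrm{lt}(f)$ that term with its coefficient, $\mathrm{lpos}(f)$ its coordinate. A basis of a submodule is a generating set that is linearly independent ($\sum a_i\circ f^{(i)}=0\Rightarrow$ all $a_i=0$). $f$ reduces modulo a set $F$ of nonzero elements in one step if $h=f-\sum_i(b_ix^{[a_i]})\circ f^{(i)}$ for some $f^{(i)}\in F$, $b_i\in\mathbb{F}_{q^m}$, $a_i\ge0$ with $\mathrm{lm}(f)=x^{[a_i]}\circ\mathrm{lm}(f^{(i)})$ and $\mathrm{lt}(f)=\sum_i(b_ix^{[a_i]})\circ\mathrm{lt}(f^{(i)})$; $f$ is minimal w.r.t. $F$ if it cannot be reduced modulo $F$; a basis $B$ is minimal if each $b\in B$ is minimal w.r.t.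 $B\setminus\{b\}$. Algorithm 2 (input $k$, $\Pi_{\mathbf g}$, $\Lambda_{\mathbf g,\mathbf r}$): $P_0=\Pi_{\mathbf g}$, $K_0=0$, $N_0=-\Lambda_{\mathbf g,\mathbf r}$, $D_0=x$, $j=0$; while $\mathrm{qdeg}(D_j)+k-1<\mathrm{qdeg}(N_j)$: compute (right symbolic division) $q_j,r_j$ with $P_j=q_j\circ N_j+r_j$ and $\mathrm{qdeg}(r_j)<\mathrm{qdeg}(N_j)$; set $P_{j+1}=N_j$, $K_{j+1}=D_j$, $N_{j+1}=r_j$, $D_{j+1}=K_j-q_j\circ D_j$; $j:=j+1$. Return $b^{(1)}=[P_j\ \ K_j]$ and $b^{(2)}=[N_j\ \ D_j]$. *)

theory Defs
  imports "Jordan_Normal_Form.Determinant"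
    "HOL-Computational_Algebra.Polynomial"
    "HOL-Computational_Algebra.Primes"
    "HOL-Library.Extended_Real"
    "HOL-Library.Product_Plus"
    "HOL-Library.While_Combinator"
begin

(* The field F_{q^m} is a finite field type 'a with CARD('a) = q^m.
   F_q is its unique subfield of order q, i.e. the roots of x^q - x. *)
definition Fq :: "nat \<Rightarrow> 'a::field set" where
  "Fq q = {x. x ^ q = x}"

(* g_1..g_n are represented (0-based) as g 0 .. g (n-1) *)
definition lin_indep_Fq :: "nat \<Rightarrow> nat \<Rightarrow> (nat \<Rightarrow> 'a::field) \<Rightarrow> bool" where
  "lin_indep_Fq q n g \<longleftrightarrow>
     (\<forall>c. (\<forall>i<n. c i \<in> Fq q) \<longrightarrow> (\<Sum>i<n. c i * g i) = 0 \<longrightarrow> (\<forall>i<n. c i = 0))"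

definition span_Fq :: "nat \<Rightarrow> nat \<Rightarrow> (nat \<Rightarrow> 'a::field) \<Rightarrow> 'a set" where
  "span_Fq q n g = {\<Sum>i<n. c i * g i | c. \<forall>i<n. c i \<in> Fq q}"

(* q-linearized polynomials, as genuine polynomials whose support is on q-powers;
   composition is polynomial composition pcompose *)
definition Lq :: "nat \<Rightarrow> 'a::field poly set" where
  "Lq q = {f. \<forall>i. coeff f i \<noteq> 0 \<longrightarrow> (\<exists>j. i = q ^ j)}"

definition qdeg :: "nat \<Rightarrow> 'a::field poly \<Rightarrow> nat" where
  "qdeg q f = (THE i. degree f = q ^ i)"

definition qdeg_e :: "nat \<Rightarrow> 'a::field poly \<Rightarrow> ereal" where
  "qdeg_e q f = (if f = 0 then -\<infinity> else ereal (real (qdeg q f)))"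

definition Pi_g :: "nat \<Rightarrow> nat \<Rightarrow> (nat \<Rightarrow> 'a::field) \<Rightarrow> 'a poly" where
  "Pi_g q n g = (\<Prod>u\<in>span_Fq q n g. [:-u, 1:])"

definition Moore :: "nat \<Rightarrow> nat \<Rightarrow> (nat \<Rightarrow> 'a::field) \<Rightarrow> 'a mat" where
  "Moore q n g = mat n n (\<lambda>(j, l). g l ^ (q ^ j))"

(* D_i(g,x): M_n(g_1,...,g_n,x) with the i-th column (0-based) removed, over 'a poly *)
definition Dmat :: "nat \<Rightarrow> nat \<Rightarrow> (nat \<Rightarrow> 'a::field) \<Rightarrow> nat \<Rightarrow> 'a poly mat" where
  "Dmat q n g i = mat n n (\<lambda>(j, l). let c = (if l < i then l else l + 1) in
       if c < n then [: g c ^ (q ^ j) :] else monom 1 (q ^ j))"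

definition Lambda_gr :: "nat \<Rightarrow> nat \<Rightarrow> (nat \<Rightarrow> 'a::field) \<Rightarrow> (nat \<Rightarrow> 'a) \<Rightarrow> 'a poly" where
  "Lambda_gr q n g r =
     (\<Sum>i<n. smult ((-1) ^ (n - 1 - i) * r i / det (Moore q n g)) (det (Dmat q n g i)))"

definition act :: "'a::comm_ring_1 poly \<Rightarrow> 'a poly \<times> 'a poly \<Rightarrow> 'a poly \<times> 'a poly" where
  "act h f = (pcompose h (fst f), pcompose h (snd f))"

definition interp_module ::
  "nat \<Rightarrow> nat \<Rightarrow> (nat \<Rightarrow> 'a::field) \<Rightarrow> (nat \<Rightarrow> 'a) \<Rightarrow> ('a poly \<times> 'a poly) set" where
  "interp_module q n g r =
     {act \<beta> (Pi_g q n g, 0) + act \<gamma> (- Lambda_gr q n g r, [:0, 1:]) | \<beta> \<gamma>. \<beta> \<in> Lq q \<and> \<gamma> \<in> Lq q}"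

(* monomials x^{[i]} e_j are pairs (i, j), j \<in> {1,2};
   (0,k-1)-weighted term-over-position order *)
definition wtop_less :: "nat \<Rightarrow> nat \<times> nat \<Rightarrow> nat \<times> nat \<Rightarrow> bool" where
  "wtop_less k m1 m2 \<longleftrightarrow>
     (let w = (\<lambda>j::nat. if j = 1 then 0 else k - 1)
      in fst m1 + w (snd m1) < fst m2 + w (snd m2) \<or>
         (fst m1 + w (snd m1) = fst m2 + w (snd m2) \<and> snd m1 < snd m2))"

definition comp_of :: "nat \<Rightarrow> 'a poly \<times> 'a poly \<Rightarrow> 'a poly" where
  "comp_of j f = (if j = 1 then fst f else snd f)"

definition mons :: "nat \<Rightarrow> 'a::zero poly \<times> 'a poly \<Rightarrow> (nat \<times> nat) set" where
  "mons q f = {(i, j) | i j. j \<in> {1, 2} \<and> coeff (comp_of j f) (q ^ i) \<noteq> 0}"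

definition lm :: "nat \<Rightarrow> nat \<Rightarrow> 'a::zero poly \<times> 'a poly \<Rightarrow> nat \<times> nat" where
  "lm q k f = (THE m. m \<in> mons q f \<and> (\<forall>m'\<in>mons q f. m' \<noteq> m \<longrightarrow> wtop_less k m' m))"

definition lpos :: "nat \<Rightarrow> nat \<Rightarrow> 'a::zero poly \<times> 'a poly \<Rightarrow> nat" where
  "lpos q k f = snd (lm q k f)"

definition term_vec :: "nat \<Rightarrow> 'a::zero \<Rightarrow> nat \<times> nat \<Rightarrow> 'a poly \<times> 'a poly" where
  "term_vec q c m = (if snd m = 1 then (monom c (q ^ fst m), 0) else (0, monom c (q ^ fst m)))"

definition lm_vec :: "nat \<Rightarrow> nat \<Rightarrow> 'a::{zero,one} poly \<times> 'a poly \<Rightarrow> 'a poly \<times> 'a poly" where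
  "lm_vec q k f = term_vec q 1 (lm q k f)"

definition lt_vec :: "nat \<Rightarrow> nat \<Rightarrow> 'a::zero poly \<times> 'a poly \<Rightarrow> 'a poly \<times> 'a poly" where
  "lt_vec q k f = (let m = lm q k f in term_vec q (coeff (comp_of (snd m) f) (q ^ fst m)) m)"

(* one-step reduction of f modulo F: the family (f^(i), b_i, a_i) is a finite list *)
definition reduces :: "nat \<Rightarrow> nat \<Rightarrow> 'a::field poly \<times> 'a poly \<Rightarrow> ('a poly \<times> 'a poly) set \<Rightarrow> bool" where
  "reduces q k f F \<longleftrightarrow> f \<noteq> 0 \<and>
     (\<exists>ts :: (('a poly \<times> 'a poly) \<times> 'a \<times> nat) list.
        (\<forall>(fi, b, a) \<in> set ts. fi \<in> F \<and> lm_vec q k f = act (monom 1 (q ^ a)) (lm_vec q k fi)) \<and>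
        lt_vec q k f = (\<Sum>(fi, b, a) \<leftarrow> ts. act (monom b (q ^ a)) (lt_vec q k fi)))"

definition minimal_wrt :: "nat \<Rightarrow> nat \<Rightarrow> 'a::field poly \<times> 'a poly \<Rightarrow> ('a poly \<times> 'a poly) set \<Rightarrow> bool" where
  "minimal_wrt q k f F \<longleftrightarrow> \<not> reduces q k f F"

definition generated :: "nat \<Rightarrow> ('a::field poly \<times> 'a poly) set \<Rightarrow> ('a poly \<times> 'a poly) set" where
  "generated q B = {\<Sum>b\<in>B. act (a b) b | a. \<forall>b\<in>B. a b \<in> Lq q}"

definition lin_indep_mod :: "nat \<Rightarrow> ('a::field poly \<times> 'a poly) set \<Rightarrow> bool" where
  "lin_indep_mod q B \<longleftrightarrow>
     (\<forall>a. (\<forall>b\<in>B. a b \<in> Lq q) \<longrightarrow> (\<Sum>b\<in>B. act (a b) b) = 0 \<longrightarrow> (\<forall>b\<in>B. a b = 0))"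

definition minimal_basis ::
  "nat \<Rightarrow> nat \<Rightarrow> ('a::field poly \<times> 'a poly) set \<Rightarrow> ('a poly \<times> 'a poly) set \<Rightarrow> bool" where
  "minimal_basis q k B M \<longleftrightarrow> finite B \<and> generated q B = M \<and> lin_indep_mod q B \<and>
     (\<forall>b\<in>B. minimal_wrt q k b (B - {b}))"

definition rdiv :: "nat \<Rightarrow> 'a::field poly \<Rightarrow> 'a poly \<Rightarrow> 'a poly \<times> 'a poly" where
  "rdiv q P N = (THE (qq, rr). qq \<in> Lq q \<and> rr \<in> Lq q \<and> P = pcompose qq N + rr \<and>
                    qdeg_e q rr < qdeg_e q N)"

definition alg2_cond :: "nat \<Rightarrow> nat \<Rightarrow> 'a::field poly \<times> 'a poly \<times> 'a poly \<times> 'a poly \<Rightarrow> bool" where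
  "alg2_cond q k s = (case s of (P, K, N, D) \<Rightarrow>
      qdeg_e q D + ereal (real (k - 1)) < qdeg_e q N)"

definition alg2_step :: "nat \<Rightarrow> 'a::field poly \<times> 'a poly \<times> 'a poly \<times> 'a poly \<Rightarrow>
    'a poly \<times> 'a poly \<times> 'a poly \<times> 'a poly" where
  "alg2_step q s = (case s of (P, K, N, D) \<Rightarrow>
      (case rdiv q P N of (qq, rr) \<Rightarrow> (N, D, rr, K - pcompose qq D)))"

definition alg2_init :: "'a::field poly \<Rightarrow> 'a poly \<Rightarrow> 'a poly \<times> 'a poly \<times> 'a poly \<times> 'a poly" where
  "alg2_init PP LL = (PP, 0, - LL, [:0, 1:])"

definition algorithm2 :: "nat \<Rightarrow> nat \<Rightarrow> 'a::field poly \<Rightarrow> 'a poly \<Rightarrow>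
    (('a poly \<times> 'a poly) \<times> ('a poly \<times> 'a poly)) option" where
  "algorithm2 q k PP LL = map_option (\<lambda>(P, K, N, D). ((P, K), (N, D)))
      (while_option (alg2_cond q k) (alg2_step q) (alg2_init PP LL))"

end

theory Submission
  imports Defs
begin


lemma my_CHAR_dvd_card: "CHAR('a::{finite,comm_ring_1}) dvd card (UNIV::'a set)"
proof -
  define c where "c = CHAR('a)"
  have c0: "c > 0" unfolding c_def by (rule finite_imp_CHAR_pos) simp
  have z: "(of_nat (c * i) :: 'a) = 0" for i by (simp add: c_def of_nat_eq_0_iff_char_dvd)
  have neg: "\<exists>j. - (of_nat i :: 'a) = of_nat j" for i
  proof
    have "i \<le> c * i" using c0 by simp
    hence "(of_nat (c * i - i) :: 'a) = of_nat (c * i) - of_nat i" by (simp add: of_nat_diff)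
    thus "- (of_nat i :: 'a) = of_nat (c * i - i)" using z by simp
  qed
  have per: "(of_nat i :: 'a) = of_nat (i mod c)" for i
  proof -
    have "(of_nat i :: 'a) = of_nat (c * (i div c) + i mod c)" by simp
    also have "\<dots> = of_nat (i mod c)" by (simp only: of_nat_add z add_0)
    finally show ?thesis .
  qed
  define Orb where "Orb x = (\<lambda>i. x + of_nat i) ` {..<c}" for x :: 'a
  have Orb_alt: "Orb x = {y. \<exists>i. y = x + of_nat i}" for x
  proof
    show "Orb x \<subseteq> {y. \<exists>i. y = x + of_nat i}" by (auto simp: Orb_def)
    show "{y. \<exists>i. y = x + of_nat i} \<subseteq> Orb x"
    proof
      fix y assume "y \<in> {y. \<exists>i. y = x + of_nat i}"
      then obtain i where "y = x + of_nat i" by blast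
      hence "y = x + of_nat (i mod c)" using per by simp
      moreover have "i mod c < c" using c0 by simp
      ultimately show "y \<in> Orb x" by (auto simp: Orb_def)
    qed
  qed
  have cardO: "card (Orb x) = c" for x
  proof -
    have "inj_on (\<lambda>i. x + (of_nat i :: 'a)) {..<c}"
    proof (rule inj_onI)
      fix i j assume ij: "i \<in> {..<c}" "j \<in> {..<c}" "x + (of_nat i :: 'a) = x + of_nat j"
      show "i = j"
      proof (rule ccontr)
        assume "i \<noteq> j"
        then consider "i < j" | "j < i" by linarith
        thus False
        proof cases
          case 1
          hence "(of_nat (j - i) :: 'a) = 0" using ij(3) by (simp add: of_nat_diff)
          hence "c dvd j - i" by (simp add: c_def of_nat_eq_0_iff_char_dvd)
          moreover have "j - i > 0" using 1 by simp
          ultimately have "c \<le> j - i" by (rule dvd_imp_le)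
          thus False using ij(2) by simp
        next
          case 2
          hence "(of_nat (i - j) :: 'a) = 0" using ij(3) by (simp add: of_nat_diff)
          hence "c dvd i - j" by (simp add: c_def of_nat_eq_0_iff_char_dvd)
          moreover have "i - j > 0" using 2 by simp
          ultimately have "c \<le> i - j" by (rule dvd_imp_le)
          thus False using ij(1) by simp
        qed
      qed
    qed
    thus ?thesis by (simp add: Orb_def card_image)
  qed
  have disj: "Orb x = Orb y" if ne: "Orb x \<inter> Orb y \<noteq> {}" for x y
  proof -
    obtain z where "z \<in> Orb x" "z \<in> Orb y" using ne by blast
    obtain i where i: "z = x + of_nat i" using \<open>z \<in> Orb x\<close> by (auto simp: Orb_alt)
    obtain j where j: "z = y + of_nat j" using \<open>z \<in> Orb y\<close> by (auto simp: Orb_alt)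
    note ij = i j
    have sub: "Orb u \<subseteq> Orb v" if uv: "u = v + of_nat a - of_nat b" for u v a b
    proof
      fix w assume "w \<in> Orb u"
      then obtain l where "w = u + of_nat l" by (auto simp: Orb_alt)
      obtain b' where b': "- (of_nat b :: 'a) = of_nat b'" using neg by blast
      have "w = v + of_nat a + (- of_nat b) + of_nat l" using \<open>w = u + of_nat l\<close> uv
        by (simp add: algebra_simps)
      also have "\<dots> = v + of_nat (a + b' + l)" unfolding b' by (simp add: algebra_simps)
      finally have "w = v + of_nat (a + b' + l)" .
      thus "w \<in> Orb v" unfolding Orb_alt by blast
    qed
    have "x = y + of_nat j - of_nat i" using ij by (simp add: algebra_simps)
    moreover have "y = x + of_nat i - of_nat j" using ij by (simp add: algebra_simps)
    ultimately show ?thesis using sub by blast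
  qed
  have U: "\<Union>(range Orb) = (UNIV :: 'a set)"
  proof -
    have "x \<in> Orb x" for x using c0 by (auto simp: Orb_def intro: image_eqI[of _ _ 0])
    thus ?thesis by blast
  qed
  have "c * card (range Orb) = card (\<Union>(range Orb))"
    by (rule card_partition) (use cardO disj in auto)
  hence "card (UNIV :: 'a set) = c * card (range Orb)" using U by simp
  thus ?thesis unfolding c_def by simp
qed




lemma frob_gen:
  fixes x y :: "'b::comm_semiring_1"
  assumes "prime CHAR('b)" "q = CHAR('b)^e"
  shows "(x+y)^(q^i) = x^(q^i) + y^(q^i)"
proof -
  have "q^i = CHAR('b)^(e*i)" using assms(2) by (simp add: power_mult)
  thus ?thesis using freshmans_dream'[OF assms(1)] by blast
qed

locale fq =
  fixes q :: nat and dummy :: "'a::{finite,field} itself"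
  assumes qpow: "\<exists>e\<ge>1. q = CHAR('a)^e"
      and qcard: "\<exists>m\<ge>1. card (UNIV :: 'a set) = q^m"
begin

lemma CHAR_prime: "prime CHAR('a)"
proof -
  have "CHAR('a) > 0" by (rule finite_imp_CHAR_pos) simp
  thus ?thesis using prime_CHAR_semidom by blast
qed

lemma q_ge2: "q \<ge> 2"
proof -
  obtain e where e: "e \<ge> 1" "q = CHAR('a)^e" using qpow by blast
  have "CHAR('a) \<ge> 2" using CHAR_prime prime_ge_2_nat by blast
  hence "CHAR('a)^1 \<le> CHAR('a)^e" using e(1) by (intro power_increasing) auto
  thus ?thesis using e \<open>CHAR('a) \<ge> 2\<close> by simp
qed

lemma q_pos[simp]: "q > 0" "q \<noteq> 0" "q^i > 0" "q^i \<noteq> 0"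
  using q_ge2 by auto

lemma frob: "(x + y :: 'a)^(q^i) = x^(q^i) + y^(q^i)"
  using qpow CHAR_prime frob_gen by blast

lemma frob_poly: "(x + y :: 'a poly)^(q^i) = x^(q^i) + y^(q^i)"
  using qpow CHAR_prime frob_gen[where 'b="'a poly"] by (metis semiring_char_poly)

abbreviation LQ where "LQ \<equiv> (Lq q :: 'a poly set)"

lemma Lq_induct[consumes 1]:
  assumes "f \<in> LQ" "P 0" "\<And>c j. P (monom c (q^j))" "\<And>a b. P a \<Longrightarrow> P b \<Longrightarrow> P (a+b)"
  shows "P f"
proof -
  have "A \<subseteq> {..degree f} \<Longrightarrow> P (\<Sum>d\<in>A. monom (coeff f d) d)" for A
  proof (induction A rule: infinite_finite_induct)
    case (infinite A) then show ?case using finite_subset assms(2) by auto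
  next
    case empty then show ?case using assms(2) by simp
  next
    case (insert x F)
    have "P (monom (coeff f x) x)"
    proof (cases "coeff f x = 0")
      case True then show ?thesis using assms(2) by simp
    next
      case False then obtain j where "x = q^j" using assms(1) unfolding Lq_def by blast
      then show ?thesis using assms(3) by simp
    qed
    then show ?case using insert assms(4) by simp
  qed
  from this[of "{..degree f}"] show ?thesis by (simp add: poly_as_sum_of_monoms)
qed

lemma Lq_0[simp]: "0 \<in> LQ" by (simp add: Lq_def)
lemma Lq_monom[simp]: "monom c (q^j) \<in> LQ" by (auto simp: Lq_def)
lemma Lq_X[simp]: "[:0,1:] \<in> LQ"
  unfolding Lq_def
proof (intro CollectI allI impI)
  fix i assume "coeff [:0,1::'a:] i \<noteq> 0"
  hence "i = 1" by (cases i) (auto simp: coeff_pCons split: nat.splits)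
  thus "\<exists>j. i = q^j" by (intro exI[of _ 0]) simp
qed
lemma Lq_add[simp]: "f \<in> LQ \<Longrightarrow> g \<in> LQ \<Longrightarrow> f + g \<in> LQ"
  unfolding Lq_def by (auto; metis add.left_neutral)
lemma Lq_uminus[simp]: "f \<in> LQ \<Longrightarrow> - f \<in> LQ"
  by (auto simp: Lq_def)
lemma Lq_diff[simp]: "f \<in> LQ \<Longrightarrow> g \<in> LQ \<Longrightarrow> f - g \<in> LQ"
  using Lq_add[of f "-g"] Lq_uminus[of g] by simp
lemma Lq_smult[simp]: "f \<in> LQ \<Longrightarrow> smult c f \<in> LQ"
  by (auto simp: Lq_def)
lemma Lq_sum: "(\<And>i. i \<in> A \<Longrightarrow> f i \<in> LQ) \<Longrightarrow> sum f A \<in> LQ"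
  by (induction A rule: infinite_finite_induct) auto

lemma Lq_coeff0: "f \<in> LQ \<Longrightarrow> coeff f 0 = 0"
proof (rule ccontr)
  assume "f \<in> LQ" "coeff f 0 \<noteq> 0"
  then obtain j where "0 = q^j" unfolding Lq_def by blast
  thus False by simp
qed

lemma Lq_power: "f \<in> LQ \<Longrightarrow> f^(q^i) \<in> LQ"
proof (induction f rule: Lq_induct)
  case 1 then show ?case by (simp add: power_0_left)
next
  case (2 c j) then show ?case by (simp add: monom_power flip: power_add)
next
  case (3 a b) then show ?case by (simp add: frob_poly)
qed

lemma pcompose_power: "pcompose (p ^ n) r = (pcompose p r) ^ n"
  by (induction n) (simp_all add: pcompose_1 pcompose_mult)

lemma pcompose_monom: "pcompose (monom c n) r = smult c (r ^ n)"
  by (simp add: monom_altdef pcompose_smult pcompose_power pcompose_pCons)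

lemma Lq_pcompose[simp]: "f \<in> LQ \<Longrightarrow> g \<in> LQ \<Longrightarrow> pcompose f g \<in> LQ"
proof (induction f rule: Lq_induct)
  case 1 then show ?case by simp
next
  case (2 c j) then show ?case by (simp add: pcompose_monom Lq_power)
next
  case (3 a b) then show ?case by (simp add: pcompose_add)
qed

lemma pcompose_Lq_add: "h \<in> LQ \<Longrightarrow> pcompose h (a + b) = pcompose h a + pcompose h b"
proof (induction h rule: Lq_induct)
  case 1 then show ?case by simp
next
  case (2 c j) then show ?case by (simp add: pcompose_monom frob_poly smult_add_right)
next
  case (3 x y) then show ?case by (simp add: pcompose_add algebra_simps)
qed

lemma pcompose_Lq_0: "h \<in> LQ \<Longrightarrow> pcompose h 0 = 0"
  by (simp add: pcompose_0' Lq_coeff0)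

lemma pcompose_Lq_uminus: "h \<in> LQ \<Longrightarrow> pcompose h (- a) = - pcompose h a"
proof -
  assume h: "h \<in> LQ"
  have "pcompose h a + pcompose h (-a) = 0"
    using pcompose_Lq_add[OF h, of a "-a"] pcompose_Lq_0[OF h] by simp
  thus ?thesis by (simp add: eq_neg_iff_add_eq_0 add.commute)
qed

lemma pcompose_Lq_diff: "h \<in> LQ \<Longrightarrow> pcompose h (a - b) = pcompose h a - pcompose h b"
  using pcompose_Lq_add[of h a "-b"] pcompose_Lq_uminus[of h b] by simp

lemma poly_Lq_add: "h \<in> LQ \<Longrightarrow> poly h (a + b) = poly h a + poly h b"
proof -
  assume h: "h \<in> LQ"
  have "[:poly h (a+b):] = pcompose h ([:a:] + [:b:])" by (simp add: pcompose_pCons_0)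
  also have "\<dots> = pcompose h [:a:] + pcompose h [:b:]" by (rule pcompose_Lq_add[OF h])
  also have "\<dots> = [:poly h a + poly h b:]" by (simp add: pcompose_pCons_0)
  finally show ?thesis by simp
qed

lemma poly_Lq_uminus: "h \<in> LQ \<Longrightarrow> poly h (- a) = - poly h a"
proof -
  assume h: "h \<in> LQ"
  have "poly h a + poly h (-a) = 0" using poly_Lq_add[OF h, of a "-a"] Lq_coeff0[OF h]
    by (simp add: poly_0_coeff_0)
  thus ?thesis by (simp add: eq_neg_iff_add_eq_0 add.commute)
qed

lemma Fq_pow: "c \<in> Fq q \<Longrightarrow> c ^ (q^j) = c"
proof (induction j)
  case (Suc j)
  have "c ^ (q ^ Suc j) = (c ^ (q^j)) ^ q" by (simp only: power_Suc2 power_mult)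
  thus ?case using Suc by (simp add: Fq_def)
qed simp

lemma poly_Lq_Fq:
  assumes h: "h \<in> LQ" and c: "c \<in> Fq q"
  shows "poly h (c * a) = c * poly h a"
  using h
proof (induction h rule: Lq_induct)
  case 1 then show ?case by simp
next
  case (2 d j)
  have "poly (monom d (q^j)) (c * a) = d * (c^(q^j) * a^(q^j))"
    by (simp add: poly_monom power_mult_distrib)
  also have "\<dots> = c * poly (monom d (q^j)) a" using Fq_pow[OF c] by (simp add: poly_monom)
  finally show ?case .
next
  case (3 x y) then show ?case by (simp add: algebra_simps)
qed

lemma Fq_add: "(a::'a) \<in> Fq q \<Longrightarrow> b \<in> Fq q \<Longrightarrow> a + b \<in> Fq q"
  using frob[of a b 1] by (simp add: Fq_def)
lemma Fq_0: "(0::'a) \<in> Fq q" by (simp add: Fq_def)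
lemma Fq_uminus: "(a::'a) \<in> Fq q \<Longrightarrow> - a \<in> Fq q"
proof -
  assume a: "a \<in> Fq q"
  have "a^q + (-a)^q = 0" using frob[of a "-a" 1] by (simp add: power_0_left)
  thus ?thesis using a by (simp add: Fq_def eq_neg_iff_add_eq_0 add.commute)
qed
lemma Fq_diff: "(a::'a) \<in> Fq q \<Longrightarrow> b \<in> Fq q \<Longrightarrow> a - b \<in> Fq q"
  using Fq_add Fq_uminus by (metis diff_conv_add_uminus)

lemma qdeg_eqI: "degree (f::'a poly) = q^i \<Longrightarrow> qdeg q f = i"
  unfolding qdeg_def using q_ge2 by (intro the_equality) (auto simp: power_inject_exp)

lemma Lq_degree: "f \<in> LQ \<Longrightarrow> f \<noteq> 0 \<Longrightarrow> degree f = q ^ qdeg q f"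
proof -
  assume "f \<in> LQ" "f \<noteq> 0"
  hence "coeff f (degree f) \<noteq> 0" by simp
  then obtain j where "degree f = q^j" using \<open>f \<in> LQ\<close> unfolding Lq_def by blast
  thus ?thesis using qdeg_eqI by simp
qed

lemma Lq_coeff_le: "f \<in> LQ \<Longrightarrow> coeff f (q^i) \<noteq> 0 \<Longrightarrow> i \<le> qdeg q f"
proof -
  assume f: "f \<in> LQ" "coeff f (q^i) \<noteq> 0"
  hence "f \<noteq> 0" by auto
  have "q^i \<le> q ^ qdeg q f" using le_degree[OF f(2)] Lq_degree[OF f(1) \<open>f\<noteq>0\<close>] by simp
  thus ?thesis using q_ge2 power_le_imp_le_exp by (metis Suc_1 Suc_le_lessD)
qed

lemma Lq_degree_pos: "f \<in> LQ \<Longrightarrow> f \<noteq> 0 \<Longrightarrow> degree f > 0"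
  using Lq_degree[of f] by simp

lemma qdeg_pcompose:
  assumes "a \<in> LQ" "b \<in> LQ" "a \<noteq> 0" "b \<noteq> 0"
  shows "pcompose a b \<noteq> 0" "qdeg q (pcompose a b) = qdeg q a + qdeg q b"
proof -
  show "pcompose a b \<noteq> 0" using pcompose_eq_0 Lq_degree_pos assms by blast
  have "degree (pcompose a b) = q^(qdeg q a + qdeg q b)"
    using Lq_degree[OF assms(1,3)] Lq_degree[OF assms(2,4)] by (simp add: degree_pcompose power_add)
  thus "qdeg q (pcompose a b) = qdeg q a + qdeg q b" by (rule qdeg_eqI)
qed

lemma qdeg_add:
  assumes "f \<in> LQ" "g \<in> LQ" "f \<noteq> 0" "g = 0 \<or> qdeg q g < qdeg q f"
  shows "f + g \<noteq> 0" "qdeg q (f + g) = qdeg q f" "g + f \<noteq> 0" "qdeg q (g + f) = qdeg q f"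
proof -
  have "degree g < degree f"
  proof (cases "g = 0")
    case True then show ?thesis using Lq_degree_pos assms by simp
  next
    case False
    hence "q ^ qdeg q g < q ^ qdeg q f" using assms q_ge2 by (intro power_strict_increasing) auto
    then show ?thesis using assms Lq_degree False by simp
  qed
  hence d: "degree (f + g) = degree f" "degree (g + f) = degree f"
    by (simp_all add: degree_add_eq_left degree_add_eq_right)
  have "degree f > 0" using Lq_degree_pos[OF assms(1,3)] .
  thus "f + g \<noteq> 0" "g + f \<noteq> 0" using d by (metis degree_0 less_irrefl)+
  show "qdeg q (f + g) = qdeg q f" "qdeg q (g + f) = qdeg q f"
    using d Lq_degree[OF assms(1,3)] qdeg_eqI[of "f+g" "qdeg q f"] qdeg_eqI[of "g+f" "qdeg q f"] by simp_all
qed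

lemma qdeg_uminus: "qdeg q (- f::'a poly) = qdeg q f"
  unfolding qdeg_def degree_minus ..

end



definition Sgen :: "nat \<Rightarrow> ('a::field poly \<times> 'a poly) \<Rightarrow> ('a poly \<times> 'a poly) \<Rightarrow> ('a poly \<times> 'a poly) set" where
  "Sgen q u v = {act a u + act b v | a b. a \<in> Lq q \<and> b \<in> Lq q}"

context fq begin

lemma qdeg_e_less:
  assumes "f \<in> LQ" "N \<in> LQ" "N \<noteq> 0" "qdeg_e q f < qdeg_e q N"
  shows "f = 0 \<or> qdeg q f < qdeg q N" "degree f < degree N"
proof -
  show 1: "f = 0 \<or> qdeg q f < qdeg q N" using assms(3,4) by (auto simp: qdeg_e_def split: if_splits)
  show "degree f < degree N"
  proof (cases "f = 0")
    case True then show ?thesis using Lq_degree_pos assms by simp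
  next
    case False
    hence "q ^ qdeg q f < q ^ qdeg q N" using 1 q_ge2 by (intro power_strict_increasing) auto
    then show ?thesis using assms Lq_degree False by simp
  qed
qed

lemma qdeg_e_lessI: "N \<noteq> 0 \<Longrightarrow> f = 0 \<or> qdeg q f < qdeg q N \<Longrightarrow> qdeg_e q f < qdeg_e q N"
  by (auto simp: qdeg_e_def)

lemma rdiv_exists:
  assumes "P \<in> LQ" "N \<in> LQ" "N \<noteq> 0"
  shows "\<exists>qq rr. qq \<in> LQ \<and> rr \<in> LQ \<and> P = pcompose qq N + rr \<and> qdeg_e q rr < qdeg_e q N"
  using assms(1)
proof (induction "degree P" arbitrary: P rule: less_induct)
  case less
  show ?case
  proof (cases "P = 0 \<or> qdeg q P < qdeg q N")
    case True
    then show ?thesis using less.prems assms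
      by (intro exI[of _ 0] exI[of _ P]) (auto intro: qdeg_e_lessI)
  next
    case False
    hence P0: "P \<noteq> 0" and le: "qdeg q N \<le> qdeg q P" by auto
    define s where "s = qdeg q P - qdeg q N"
    define a where "a = lead_coeff P / lead_coeff N ^ (q^s)"
    define t where "t = monom a (q^s)"
    define T where "T = pcompose t N"
    have tL: "t \<in> LQ" by (simp add: t_def)
    have T_eq: "T = smult a (N ^ (q^s))" by (simp add: T_def t_def pcompose_monom)
    have dN: "degree N = q ^ qdeg q N" using Lq_degree assms by simp
    have dP: "degree P = q ^ qdeg q P" using Lq_degree less.prems P0 by simp
    have lcN: "lead_coeff N \<noteq> 0" using assms by simp
    have a0: "a \<noteq> 0" using P0 lcN by (simp add: a_def)
    have dT: "degree T = degree P"
      using a0 by (simp add: T_eq degree_power_eq assms(3) dN dP s_def le flip: power_add)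
    have lT: "lead_coeff T = lead_coeff P"
      using lcN by (simp add: T_eq lead_coeff_power a_def)
    have TL: "T \<in> LQ" using tL assms by (simp add: T_def)
    have "degree (P - T) < degree P \<or> P - T = 0"
    proof -
      have "coeff (P - T) (degree P) = 0" using lT dT by simp
      moreover have "degree (P - T) \<le> degree P" using dT by (simp add: degree_diff_le)
      ultimately show ?thesis by (metis le_neq_implies_less leading_coeff_0_iff)
    qed
    moreover have "P - T \<in> LQ" using TL less.prems by simp
    ultimately obtain qq rr where h: "qq \<in> LQ" "rr \<in> LQ" "P - T = pcompose qq N + rr"
      "qdeg_e q rr < qdeg_e q N"
    proof (elim disjE)
      assume "degree (P - T) < degree P" "P - T \<in> LQ"
      from less.hyps[OF this] show ?thesis using that by blast
    next
      assume "P - T = 0"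
      thus ?thesis using that[of 0 0] assms by (auto intro: qdeg_e_lessI)
    qed
    have "P = pcompose (qq + t) N + rr" using h(3) by (simp add: pcompose_add T_def algebra_simps)
    then show ?thesis using h tL by (intro exI[of _ "qq + t"] exI[of _ rr]) auto
  qed
qed

lemma rdiv_unique:
  assumes "N \<in> LQ" "N \<noteq> 0"
    and "q1 \<in> LQ" "r1 \<in> LQ" "P = pcompose q1 N + r1" "qdeg_e q r1 < qdeg_e q N"
    and "q2 \<in> LQ" "r2 \<in> LQ" "P = pcompose q2 N + r2" "qdeg_e q r2 < qdeg_e q N"
  shows "q1 = q2 \<and> r1 = r2"
proof -
  have eq: "pcompose (q1 - q2) N = r2 - r1" using assms(5,9) by (simp add: pcompose_diff algebra_simps)
  have "degree (r2 - r1) < degree N"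
    using qdeg_e_less(2)[OF assms(4,1,2,6)] qdeg_e_less(2)[OF assms(8,1,2,10)] by (simp add: degree_diff_less)
  hence "q1 = q2"
  proof (rule contrapos_pp)
    assume "q1 \<noteq> q2"
    hence "q1 - q2 \<noteq> 0" by simp
    hence "degree (pcompose (q1 - q2) N) \<ge> degree N"
      using Lq_degree_pos[of "q1 - q2"] assms by (simp add: degree_pcompose)
    thus "\<not> degree (r2 - r1) < degree N" using eq by simp
  qed
  thus ?thesis using assms(5,9) by simp
qed

lemma rdiv_props:
  assumes "P \<in> LQ" "N \<in> LQ" "N \<noteq> 0" "rdiv q P N = (qq, rr)"
  shows "qq \<in> LQ" "rr \<in> LQ" "P = pcompose qq N + rr" "qdeg_e q rr < qdeg_e q N"
proof -
  obtain q0 r0 where h: "q0 \<in> LQ" "r0 \<in> LQ" "P = pcompose q0 N + r0" "qdeg_e q r0 < qdeg_e q N"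
    using rdiv_exists[OF assms(1-3)] by blast
  have "rdiv q P N = (q0, r0)"
    unfolding rdiv_def
  proof (rule the_equality)
    show "case (q0, r0) of (qq, rr) \<Rightarrow> qq \<in> Lq q \<and> rr \<in> Lq q \<and> P = pcompose qq N + rr \<and> qdeg_e q rr < qdeg_e q N"
      using h by simp
  next
    fix x assume "case x of (qq, rr) \<Rightarrow> qq \<in> Lq q \<and> rr \<in> Lq q \<and> P = pcompose qq N + rr \<and> qdeg_e q rr < qdeg_e q N"
    then obtain a b where x: "x = (a, b)" "a \<in> LQ" "b \<in> LQ" "P = pcompose a N + b" "qdeg_e q b < qdeg_e q N"
      by (cases x) auto
    thus "x = (q0, r0)" using rdiv_unique[OF assms(2,3) x(2-5) h] by simp
  qed
  thus "qq \<in> LQ" "rr \<in> LQ" "P = pcompose qq N + rr" "qdeg_e q rr < qdeg_e q N"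
    using h assms(4) by auto
qed

lemma act_add_left: "act (a + b) v = act a v + act b v"
  by (simp add: act_def pcompose_add)
lemma act_diff_left: "act (a - b) v = act a v - act b v"
  by (simp add: act_def pcompose_diff)
lemma act_assoc: "act a (act b v) = act (pcompose a b) v"
  by (simp add: act_def pcompose_assoc)
lemma act_add_right: "a \<in> LQ \<Longrightarrow> act a (u + v) = act a u + act a v"
  by (simp add: act_def pcompose_Lq_add prod_eq_iff)
lemma act_diff_right: "a \<in> LQ \<Longrightarrow> act a (u - v) = act a u - act a v"
  by (simp add: act_def pcompose_Lq_diff prod_eq_iff)

lemma Sgen_step:
  fixes u v :: "'a poly \<times> 'a poly"
  assumes "qq \<in> LQ"
  shows "Sgen q u v = Sgen q v (u - act qq v)"
proof
  show "Sgen q u v \<subseteq> Sgen q v (u - act qq v)"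
  proof
    fix x assume "x \<in> Sgen q u v"
    then obtain a b where ab: "a \<in> LQ" "b \<in> LQ" "x = act a u + act b v" unfolding Sgen_def by blast
    have "x = act (pcompose a qq + b) v + act a (u - act qq v)"
      using ab by (simp add: act_diff_right act_assoc act_add_left algebra_simps)
    moreover have "pcompose a qq + b \<in> LQ" using ab assms by simp
    ultimately show "x \<in> Sgen q v (u - act qq v)" unfolding Sgen_def using ab by blast
  qed
next
  show "Sgen q v (u - act qq v) \<subseteq> Sgen q u v"
  proof
    fix x assume "x \<in> Sgen q v (u - act qq v)"
    then obtain a b where ab: "a \<in> LQ" "b \<in> LQ" "x = act a v + act b (u - act qq v)" unfolding Sgen_def by blast
    have "x = act b u + act (a - pcompose b qq) v"
      using ab by (simp add: act_diff_right act_assoc act_diff_left algebra_simps)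
    moreover have "a - pcompose b qq \<in> LQ" using ab assms by simp
    ultimately show "x \<in> Sgen q u v" unfolding Sgen_def using ab by blast
  qed
qed


definition meas2 :: "'a poly \<times> 'a poly \<times> 'a poly \<times> 'a poly \<Rightarrow> nat" where
  "meas2 s = (case s of (P, K, N, D) \<Rightarrow> if N = 0 then 0 else Suc (degree N))"

definition inv2 :: "nat \<Rightarrow> ('a poly \<times> 'a poly) set \<Rightarrow> 'a poly \<times> 'a poly \<times> 'a poly \<times> 'a poly \<Rightarrow> bool" where
  "inv2 k M s = (case s of (P, K, N, D) \<Rightarrow> P \<in> LQ \<and> K \<in> LQ \<and> N \<in> LQ \<and> D \<in> LQ \<and>
     P \<noteq> 0 \<and> (K = 0 \<or> qdeg q K + (k - 1) < qdeg q P) \<and> D \<noteq> 0 \<and> (K = 0 \<or> qdeg q K < qdeg q D) \<and>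
     (N = 0 \<or> qdeg q N < qdeg q P) \<and> Sgen q (P, K) (N, D) = M)"

lemma cond_iff:
  assumes "D \<noteq> 0"
  shows "alg2_cond q k (P, K, N, D) \<longleftrightarrow> N \<noteq> 0 \<and> qdeg q D + (k - 1) < qdeg q N"
  using assms by (auto simp: alg2_cond_def qdeg_e_def)

lemma inv2_step:
  assumes inv: "inv2 k M s" and c: "alg2_cond q k s"
  shows "inv2 k M (alg2_step q s) \<and> meas2 (alg2_step q s) < meas2 s"
proof -
  obtain P K N D where s: "s = (P, K, N, D)" by (cases s) auto
  have L: "P \<in> LQ" "K \<in> LQ" "N \<in> LQ" "D \<in> LQ" and P0: "P \<noteq> 0"
    and KP: "K = 0 \<or> qdeg q K + (k - 1) < qdeg q P" and D0: "D \<noteq> 0"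
    and KD: "K = 0 \<or> qdeg q K < qdeg q D" and NP: "N = 0 \<or> qdeg q N < qdeg q P"
    and S: "Sgen q (P, K) (N, D) = M"
    using inv by (auto simp: inv2_def s)
  from c D0 have N0: "N \<noteq> 0" and DN: "qdeg q D + (k - 1) < qdeg q N"
    by (auto simp: s cond_iff)
  obtain qq rr where qr: "rdiv q P N = (qq, rr)" by (cases "rdiv q P N") auto
  note R = rdiv_props[OF L(1,3) N0 qr]
  have st: "alg2_step q s = (N, D, rr, K - pcompose qq D)"
    by (simp add: alg2_step_def s qr)
  have rrN: "rr = 0 \<or> qdeg q rr < qdeg q N" and drr: "degree rr < degree N"
    using qdeg_e_less[OF R(2) L(3) N0 R(4)] by auto
  have qq0: "qq \<noteq> 0"
  proof
    assume "qq = 0"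
    hence "P = rr" using R(3) by simp
    thus False using rrN P0 NP N0 by auto
  qed
  have cL: "pcompose qq N \<in> LQ" using R(1) L(3) by simp
  have "rr = 0 \<or> qdeg q rr < qdeg q (pcompose qq N)"
    using rrN qdeg_pcompose[OF R(1) L(3) qq0 N0] by auto
  hence "qdeg q P = qdeg q (pcompose qq N)"
    using qdeg_add(2)[OF cL R(2) qdeg_pcompose(1)[OF R(1) L(3) qq0 N0]] R(3) by simp
  hence qP: "qdeg q P = qdeg q qq + qdeg q N" using qdeg_pcompose[OF R(1) L(3) qq0 N0] by simp
  hence qq1: "qdeg q qq \<ge> 1" using NP N0 by auto
  define X where "X = pcompose qq D"
  have XL: "X \<in> LQ" using R L by (simp add: X_def)
  have X0: "X \<noteq> 0" and qX: "qdeg q X = qdeg q qq + qdeg q D"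
    using qdeg_pcompose[OF R(1) L(4) qq0 D0] by (auto simp: X_def)
  have "-X \<noteq> 0" using X0 by simp
  moreover have "K = 0 \<or> qdeg q K < qdeg q (-X)" using KD qX qq1 by (auto simp: qdeg_uminus)
  ultimately have D'0: "K + - X \<noteq> 0" and qD': "qdeg q (K + - X) = qdeg q X"
    using qdeg_add(3,4)[of "-X" K] XL L by (auto simp: qdeg_uminus)
  have Sgen': "Sgen q (N, D) (rr, K - X) = M"
  proof -
    have "(rr, K - X) = (P, K) - act qq (N, D)" using R(3) by (simp add: act_def X_def)
    thus ?thesis using Sgen_step[OF R(1), of "(P, K)" "(N, D)"] S by simp
  qed
  have KXL: "K - X \<in> LQ" using L XL by simp
  have KX0: "K - X \<noteq> 0" using D'0 by simp
  have "qdeg q (K - X) = qdeg q X" using qD' by simp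
  hence KXD: "qdeg q D < qdeg q (K - X)" using qX qq1 by simp
  have "inv2 k M (N, D, rr, K - X)"
    unfolding inv2_def prod.case using L(3) L(4) R(2) KXL N0 D0 DN KX0 KXD rrN Sgen' by blast
  moreover have "meas2 (N, D, rr, K - X) < meas2 s" using drr N0 by (simp add: meas2_def s)
  ultimately show ?thesis by (simp add: st X_def)
qed

lemma inv2_init:
  assumes "PP \<in> LQ" "PP \<noteq> 0" "LL \<in> LQ" "LL = 0 \<or> qdeg q LL < qdeg q PP"
  shows "inv2 k (Sgen q (PP, 0) (- LL, [:0, 1:])) (alg2_init PP LL)"
  using assms by (auto simp: inv2_def alg2_init_def qdeg_uminus)

lemma alg2_terminates:
  assumes "inv2 k M s0"
  shows "\<exists>P K N D. while_option (alg2_cond q k) (alg2_step q) s0 = Some (P, K, N, D) \<and>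
            inv2 k M (P, K, N, D) \<and> \<not> alg2_cond q k (P, K, N, D)"
proof -
  have "\<exists>t. while_option (alg2_cond q k) (alg2_step q) s0 = Some t"
    by (rule measure_while_option_Some[of "inv2 k M" "alg2_cond q k" "alg2_step q" meas2 s0])
       (use inv2_step assms in auto)
  then obtain t where t: "while_option (alg2_cond q k) (alg2_step q) s0 = Some t" ..
  have "inv2 k M t"
    by (rule while_option_rule[of "inv2 k M" "alg2_cond q k" "alg2_step q" s0 t])
       (use inv2_step t assms in auto)
  moreover have "\<not> alg2_cond q k t" using while_option_stop[OF t] .
  ultimately show ?thesis using t by (cases t) auto
qed


lemma wtop_asym: "wtop_less k a b \<Longrightarrow> \<not> wtop_less k b a"
  by (auto simp: wtop_less_def Let_def)

lemma lm_eqI: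
  assumes "m0 \<in> mons q f" "\<And>m. m \<in> mons q f \<Longrightarrow> m \<noteq> m0 \<Longrightarrow> wtop_less k m m0"
  shows "lm q k f = m0"
  unfolding lm_def
proof (rule the_equality)
  show "m0 \<in> mons q f \<and> (\<forall>m'\<in>mons q f. m' \<noteq> m0 \<longrightarrow> wtop_less k m' m0)" using assms by blast
next
  fix m assume m: "m \<in> mons q f \<and> (\<forall>m'\<in>mons q f. m' \<noteq> m \<longrightarrow> wtop_less k m' m)"
  show "m = m0"
  proof (rule ccontr)
    assume "m \<noteq> m0"
    hence "wtop_less k m m0" "wtop_less k m0 m" using assms m by auto
    thus False using wtop_asym by blast
  qed
qed

lemma mons_iff: "(i, j) \<in> mons q (f1, f2) \<longleftrightarrow>
    (j = 1 \<and> coeff f1 (q^i) \<noteq> 0) \<or> (j = 2 \<and> coeff f2 (q^i) \<noteq> 0)"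
  by (auto simp: mons_def comp_of_def)

lemma lead_coeff_qdeg: "f \<in> LQ \<Longrightarrow> f \<noteq> 0 \<Longrightarrow> coeff f (q ^ qdeg q f) \<noteq> 0"
  using Lq_degree[of f] by (metis leading_coeff_0_iff)

lemma lm_pos1:
  assumes "f1 \<in> LQ" "f2 \<in> LQ" "f1 \<noteq> 0" "f2 = 0 \<or> qdeg q f2 + (k - 1) < qdeg q f1"
  shows "lm q k (f1, f2) = (qdeg q f1, 1)"
proof (rule lm_eqI)
  show "(qdeg q f1, 1) \<in> mons q (f1, f2)" using lead_coeff_qdeg assms by (simp add: mons_iff)
next
  fix m assume m: "m \<in> mons q (f1, f2)" "m \<noteq> (qdeg q f1, 1)"
  obtain i j where mij: "m = (i, j)" by (cases m)
  show "wtop_less k m (qdeg q f1, 1)"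
  proof (cases "j = 1")
    case True
    hence "coeff f1 (q^i) \<noteq> 0" "i \<noteq> qdeg q f1" using m mij by (auto simp: mons_iff)
    hence "i < qdeg q f1" using Lq_coeff_le[OF assms(1)] by (meson le_neq_implies_less)
    thus ?thesis using True mij by (simp add: wtop_less_def)
  next
    case False
    hence j: "j = 2" "coeff f2 (q^i) \<noteq> 0" using m mij by (auto simp: mons_iff)
    hence "f2 \<noteq> 0" by auto
    hence "i + (k - 1) < qdeg q f1" using Lq_coeff_le[OF assms(2) j(2)] assms(4) by linarith
    thus ?thesis using j mij by (simp add: wtop_less_def)
  qed
qed

lemma lm_pos2:
  assumes "f1 \<in> LQ" "f2 \<in> LQ" "f2 \<noteq> 0" "f1 = 0 \<or> qdeg q f1 \<le> qdeg q f2 + (k - 1)"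
  shows "lm q k (f1, f2) = (qdeg q f2, 2)"
proof (rule lm_eqI)
  show "(qdeg q f2, 2) \<in> mons q (f1, f2)" using lead_coeff_qdeg assms by (simp add: mons_iff)
next
  fix m assume m: "m \<in> mons q (f1, f2)" "m \<noteq> (qdeg q f2, 2)"
  obtain i j where mij: "m = (i, j)" by (cases m)
  show "wtop_less k m (qdeg q f2, 2)"
  proof (cases "j = 1")
    case True
    hence c: "coeff f1 (q^i) \<noteq> 0" using m mij by (auto simp: mons_iff)
    hence "f1 \<noteq> 0" by auto
    hence "i \<le> qdeg q f2 + (k - 1)" using Lq_coeff_le[OF assms(1) c] assms(4) by linarith
    thus ?thesis using True mij by (auto simp: wtop_less_def)
  next
    case False
    hence j: "j = 2" "coeff f2 (q^i) \<noteq> 0" using m mij by (auto simp: mons_iff)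
    hence "i \<noteq> qdeg q f2" using m mij by auto
    hence "i < qdeg q f2" using Lq_coeff_le[OF assms(2) j(2)] by linarith
    thus ?thesis using j mij by (simp add: wtop_less_def)
  qed
qed

lemma act_monom_fst0: "act (monom 1 (q^a)) (0, y) = (0, pcompose (monom 1 (q^a)) y)"
  by (simp add: act_def pcompose_0')
lemma act_monom_snd0: "act (monom 1 (q^a)) (y, 0) = (pcompose (monom 1 (q^a)) y, 0)"
  by (simp add: act_def pcompose_0')

lemma not_reduces1:
  fixes f g :: "'a poly \<times> 'a poly"
  assumes "lm q k f = (i, 1)" "coeff (fst f) (q^i) \<noteq> 0" "lm q k g = (j, 2)"
  shows "\<not> reduces q k f {g}"
proof
  assume "reduces q k f {g}"
  then obtain ts :: "(('a poly \<times> 'a poly) \<times> 'a \<times> nat) list" where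
    ts: "\<forall>(fi, b, a) \<in> set ts. fi \<in> {g} \<and> lm_vec q k f = act (monom 1 (q ^ a)) (lm_vec q k fi)"
        "lt_vec q k f = (\<Sum>(fi, b, a) \<leftarrow> ts. act (monom b (q ^ a)) (lt_vec q k fi))"
    unfolding reduces_def by blast
  have "set ts = {}"
  proof (rule ccontr)
    assume "set ts \<noteq> {}"
    then obtain fi b a where "(fi, b, a) \<in> set ts" by (metis all_not_in_conv prod_cases3)
    hence "fi = g" "lm_vec q k f = act (monom 1 (q ^ a)) (lm_vec q k fi)" using ts(1) by auto
    moreover have "lm_vec q k f = (monom 1 (q^i), 0)" "lm_vec q k g = (0, monom 1 (q^j))"
      using assms by (simp_all add: lm_vec_def term_vec_def)
    ultimately have "(monom 1 (q ^ i), 0) = act (monom 1 (q ^ a)) (0, monom (1::'a) (q^j))" by simp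
    thus False by (simp add: act_monom_fst0)
  qed
  hence "lt_vec q k f = 0" using ts(2) by simp
  thus False using assms by (simp add: lt_vec_def term_vec_def comp_of_def prod_eq_iff)
qed

lemma not_reduces2:
  fixes f g :: "'a poly \<times> 'a poly"
  assumes "lm q k f = (i, 2)" "coeff (snd f) (q^i) \<noteq> 0" "lm q k g = (j, 1)"
  shows "\<not> reduces q k f {g}"
proof
  assume "reduces q k f {g}"
  then obtain ts :: "(('a poly \<times> 'a poly) \<times> 'a \<times> nat) list" where
    ts: "\<forall>(fi, b, a) \<in> set ts. fi \<in> {g} \<and> lm_vec q k f = act (monom 1 (q ^ a)) (lm_vec q k fi)"
        "lt_vec q k f = (\<Sum>(fi, b, a) \<leftarrow> ts. act (monom b (q ^ a)) (lt_vec q k fi))"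
    unfolding reduces_def by blast
  have "set ts = {}"
  proof (rule ccontr)
    assume "set ts \<noteq> {}"
    then obtain fi b a where "(fi, b, a) \<in> set ts" by (metis all_not_in_conv prod_cases3)
    hence "fi = g" "lm_vec q k f = act (monom 1 (q ^ a)) (lm_vec q k fi)" using ts(1) by auto
    moreover have "lm_vec q k f = (0, monom 1 (q^i))" "lm_vec q k g = (monom 1 (q^j), 0)"
      using assms by (simp_all add: lm_vec_def term_vec_def)
    ultimately have "(0, monom 1 (q ^ i)) = act (monom 1 (q ^ a)) (monom (1::'a) (q^j), 0)" by simp
    thus False by (simp add: act_monom_snd0)
  qed
  hence "lt_vec q k f = 0" using ts(2) by simp
  thus False using assms by (simp add: lt_vec_def term_vec_def comp_of_def prod_eq_iff)
qed

lemma indep2: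
  assumes L: "P \<in> LQ" "K \<in> LQ" "N \<in> LQ" "D \<in> LQ" "\<alpha> \<in> LQ" "\<beta> \<in> LQ"
    and P0: "P \<noteq> 0" and KP: "K = 0 \<or> qdeg q K + (k - 1) < qdeg q P"
    and D0: "D \<noteq> 0" and ND: "N = 0 \<or> qdeg q N \<le> qdeg q D + (k - 1)"
    and e1: "pcompose \<alpha> P + pcompose \<beta> N = 0" and e2: "pcompose \<alpha> K + pcompose \<beta> D = 0"
  shows "\<alpha> = 0 \<and> \<beta> = 0"
proof (cases "\<alpha> = 0")
  case True
  hence "pcompose \<beta> D = 0" using e2 by simp
  hence "\<beta> = 0" using pcompose_eq_0 Lq_degree_pos[OF L(4) D0] by blast
  thus ?thesis using True by simp
next
  case False
  have aP: "pcompose \<alpha> P \<noteq> 0" "qdeg q (pcompose \<alpha> P) = qdeg q \<alpha> + qdeg q P"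
    using qdeg_pcompose[OF L(5) L(1) False P0] by auto
  have bN: "pcompose \<beta> N = - pcompose \<alpha> P" using e1 by (simp add: eq_neg_iff_add_eq_0 add.commute)
  hence b0: "\<beta> \<noteq> 0" "N \<noteq> 0" using aP L(6) by (auto simp: pcompose_Lq_0)
  have "qdeg q \<beta> + qdeg q N = qdeg q \<alpha> + qdeg q P"
    using bN qdeg_pcompose[OF L(6) L(3) b0] aP by (simp add: qdeg_uminus)
  moreover have bD: "pcompose \<beta> D \<noteq> 0" "qdeg q (pcompose \<beta> D) = qdeg q \<beta> + qdeg q D"
    using qdeg_pcompose[OF L(6) L(4) b0(1) D0] by auto
  moreover have aK: "pcompose \<alpha> K = - pcompose \<beta> D" using e2 by (simp add: eq_neg_iff_add_eq_0)
  hence K0: "K \<noteq> 0" using bD L(5) by (auto simp: pcompose_Lq_0)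
  hence "qdeg q \<alpha> + qdeg q K = qdeg q \<beta> + qdeg q D"
    using aK qdeg_pcompose[OF L(5) L(2) False K0] bD by (simp add: qdeg_uminus)
  ultimately show ?thesis using KP ND K0 b0 by linarith
qed

lemma final_basis:
  assumes inv: "inv2 k M (P, K, N, D)" and nc: "\<not> alg2_cond q k (P, K, N, D)" and k: "k \<ge> 1"
  shows "minimal_basis q k {(P, K), (N, D)} M \<and> lpos q k (P, K) = 1 \<and> lpos q k (N, D) = 2"
proof -
  have L: "P \<in> LQ" "K \<in> LQ" "N \<in> LQ" "D \<in> LQ" and P0: "P \<noteq> 0"
    and KP: "K = 0 \<or> qdeg q K + (k - 1) < qdeg q P" and D0: "D \<noteq> 0"
    and S: "Sgen q (P, K) (N, D) = M"
    using inv by (auto simp: inv2_def)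
  have ND: "N = 0 \<or> qdeg q N \<le> qdeg q D + (k - 1)" using nc D0 by (auto simp: cond_iff)
  have lm1: "lm q k (P, K) = (qdeg q P, 1)" using lm_pos1[OF L(1,2) P0 KP] .
  have lm2: "lm q k (N, D) = (qdeg q D, 2)" using lm_pos2[OF L(3,4) D0 ND] .
  have ne: "(P, K) \<noteq> (N, D)" using lm1 lm2 by auto
  have gen: "generated q {(P, K), (N, D)} = M"
  proof -
    have "generated q {(P, K), (N, D)} = Sgen q (P, K) (N, D)"
    proof
      show "generated q {(P, K), (N, D)} \<subseteq> Sgen q (P, K) (N, D)"
      proof
        fix x assume "x \<in> generated q {(P, K), (N, D)}"
        then obtain f where f: "\<forall>z\<in>{(P, K), (N, D)}. f z \<in> Lq q"
          "x = (\<Sum>z\<in>{(P, K), (N, D)}. act (f z) z)" unfolding generated_def by blast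
        hence "x = act (f (P, K)) (P, K) + act (f (N, D)) (N, D)" using ne by simp
        moreover have "f (P, K) \<in> LQ" "f (N, D) \<in> LQ" using f(1) by auto
        ultimately show "x \<in> Sgen q (P, K) (N, D)" unfolding Sgen_def by blast
      qed
    next
      show "Sgen q (P, K) (N, D) \<subseteq> generated q {(P, K), (N, D)}"
      proof
        fix x assume "x \<in> Sgen q (P, K) (N, D)"
        then obtain a b where ab: "a \<in> LQ" "b \<in> LQ" "x = act a (P, K) + act b (N, D)"
          unfolding Sgen_def by blast
        define f where "f = (\<lambda>z. if z = (P, K) then a else b)"
        have fv: "f (P, K) = a" "f (N, D) = b" using ne by (auto simp: f_def)
        have "x = (\<Sum>z\<in>{(P, K), (N, D)}. act (f z) z)" using ne ab fv by simp
        moreover have "\<forall>z\<in>{(P, K), (N, D)}. f z \<in> Lq q" using ab fv by simp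
        ultimately show "x \<in> generated q {(P, K), (N, D)}" unfolding generated_def by blast
      qed
    qed
    thus ?thesis using S by simp
  qed
  have ind: "lin_indep_mod q {(P, K), (N, D)}"
    unfolding lin_indep_mod_def
  proof (intro allI impI)
    fix a :: "'a poly \<times> 'a poly \<Rightarrow> 'a poly"
    assume a: "\<forall>b\<in>{(P, K), (N, D)}. a b \<in> Lq q" "(\<Sum>b\<in>{(P, K), (N, D)}. act (a b) b) = 0"
    have "act (a (P, K)) (P, K) + act (a (N, D)) (N, D) = 0" using a(2) ne by simp
    hence e: "pcompose (a (P, K)) P + pcompose (a (N, D)) N = 0"
             "pcompose (a (P, K)) K + pcompose (a (N, D)) D = 0"
      by (simp_all add: act_def prod_eq_iff)
    have "a (P, K) = 0 \<and> a (N, D) = 0"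
      using indep2[OF L _ _ P0 KP D0 ND e] a(1) by simp
    thus "\<forall>b\<in>{(P, K), (N, D)}. a b = 0" by simp
  qed
  have m1: "minimal_wrt q k (P, K) ({(P, K), (N, D)} - {(P, K)})"
  proof -
    have "{(P, K), (N, D)} - {(P, K)} = {(N, D)}" using ne by auto
    thus ?thesis unfolding minimal_wrt_def using not_reduces1[OF lm1 _ lm2] lead_coeff_qdeg[OF L(1) P0] by simp
  qed
  have m2: "minimal_wrt q k (N, D) ({(P, K), (N, D)} - {(N, D)})"
  proof -
    have "{(P, K), (N, D)} - {(N, D)} = {(P, K)}" using ne by auto
    thus ?thesis unfolding minimal_wrt_def using not_reduces2[OF lm2 _ lm1] lead_coeff_qdeg[OF L(4) D0] by simp
  qed
  show ?thesis unfolding minimal_basis_def lpos_def using gen ind m1 m2 lm1 lm2 by auto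
qed

lemma alg2_main:
  assumes "k \<ge> 1" "PP \<in> LQ" "PP \<noteq> 0" "LL \<in> LQ" "LL = 0 \<or> qdeg q LL < qdeg q PP"
  shows "\<exists>b1 b2. algorithm2 q k PP LL = Some (b1, b2) \<and>
           minimal_basis q k {b1, b2} (Sgen q (PP, 0) (- LL, [:0, 1:])) \<and>
           lpos q k b1 = 1 \<and> lpos q k b2 = 2"
proof -
  obtain P K N D where w: "while_option (alg2_cond q k) (alg2_step q) (alg2_init PP LL) = Some (P, K, N, D)"
     and i: "inv2 k (Sgen q (PP, 0) (- LL, [:0, 1:])) (P, K, N, D)" and c: "\<not> alg2_cond q k (P, K, N, D)"
    using alg2_terminates[OF inv2_init[OF assms(2-5)]] by blast
  have "algorithm2 q k PP LL = Some ((P, K), (N, D))" by (simp add: algorithm2_def w)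
  thus ?thesis using final_basis[OF i c assms(1)] by blast
qed

end



definition LqN :: "nat \<Rightarrow> nat \<Rightarrow> 'a::field poly \<Rightarrow> bool" where
  "LqN q n f \<longleftrightarrow> (\<forall>d. coeff f d \<noteq> 0 \<longrightarrow> (\<exists>j<n. d = q^j))"

lemma LqN_sum: "(\<And>i. i \<in> A \<Longrightarrow> LqN q n (f i)) \<Longrightarrow> LqN q n (sum f A)"
proof (induction A rule: infinite_finite_induct)
  case (insert x F)
  then show ?case unfolding LqN_def by (auto simp: coeff_add) (metis add.left_neutral)
qed (auto simp: LqN_def)

lemma LqN_smult: "LqN q n f \<Longrightarrow> LqN q n (smult c f)"
  by (auto simp: LqN_def)

lemma LqN_monom: "j < n \<Longrightarrow> LqN q n (monom c (q^j))"
  by (auto simp: LqN_def)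

lemma det_const_mat:
  fixes A :: "'a::field poly mat"
  assumes "A \<in> carrier_mat m m" "\<And>a b. a < m \<Longrightarrow> b < m \<Longrightarrow> degree (A $$ (a, b)) = 0"
  shows "det A = [:det (map_mat (\<lambda>x. coeff x 0) A):]"
proof -
  interpret c: comm_ring_hom "\<lambda>x::'a. [:x:]"
    by unfold_locales (auto simp: one_pCons)
  have "A = map_mat (\<lambda>x. [:x:]) (map_mat (\<lambda>x. coeff x 0) A)"
    using assms by (intro eq_matI) (auto simp: degree_0_id)
  hence "det A = det (map_mat (\<lambda>x. [:x:]) (map_mat (\<lambda>x. coeff x 0) A))" by simp
  also have "\<dots> = [:det (map_mat (\<lambda>x. coeff x 0) A):]" by (rule c.hom_det)
  finally show ?thesis .
qed

lemma det_Dmat_LqN: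
  fixes g :: "nat \<Rightarrow> 'a::field"
  assumes "i < n"
  shows "LqN q n (det (Dmat q n g i))"
proof -
  define A where "A = Dmat q n g i"
  have A: "A \<in> carrier_mat n n" by (simp add: A_def Dmat_def)
  have n1: "n - 1 < n" using assms by simp
  have "det A = (\<Sum>j<n. A $$ (j, n - 1) * cofactor A j (n - 1))"
    by (rule laplace_expansion_column[OF A n1])
  also have "LqN q n \<dots>"
  proof (rule LqN_sum)
    fix j assume j: "j \<in> {..<n}"
    have "\<not> n - 1 < i" using assms by auto
    hence Ajn: "A $$ (j, n - 1) = monom 1 (q^j)" using j n1 by (simp add: A_def Dmat_def Let_def)
    have MD: "mat_delete A j (n - 1) \<in> carrier_mat (n - 1) (n - 1)"
      using mat_delete_carrier[OF A] .
    have "degree (mat_delete A j (n - 1) $$ (a, b)) = 0" if "a < n - 1" "b < n - 1" for a b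
    proof -
      have "mat_delete A j (n - 1) $$ (a, b) = A $$ (if a < j then a else Suc a, b)"
        using that A by (simp add: mat_delete_def)
      moreover have "(if a < j then a else Suc a) < n" using that j by auto
      moreover have "(if b < i then b else b + 1) < n" using that by auto
      ultimately show ?thesis using that by (simp add: A_def Dmat_def Let_def)
    qed
    hence "det (mat_delete A j (n - 1)) = [:det (map_mat (\<lambda>x. coeff x 0) (mat_delete A j (n - 1))):]"
      using det_const_mat[OF MD] by blast
    moreover have "(-1::'a poly)^kk = [:(-1)^kk:]" for kk
      by (induction kk) (simp_all add: one_pCons)
    ultimately have "cofactor A j (n - 1) = [:(-1)^(j + (n - 1)) * det (map_mat (\<lambda>x. coeff x 0) (mat_delete A j (n - 1))):]"
      unfolding cofactor_def by simp
    then obtain c where "cofactor A j (n - 1) = [:c:]" by blast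
    hence "A $$ (j, n - 1) * cofactor A j (n - 1) = monom c (q^j)"
      using Ajn by (simp add: monom_altdef)
    thus "LqN q n (A $$ (j, n - 1) * cofactor A j (n - 1))" using j LqN_monom by auto
  qed
  finally show ?thesis unfolding A_def .
qed

lemma Lambda_LqN:
  fixes g r :: "nat \<Rightarrow> 'a::field"
  shows "LqN q n (Lambda_gr q n g r)"
  unfolding Lambda_gr_def by (intro LqN_sum LqN_smult det_Dmat_LqN) simp

context fq begin

lemma LqN_Lq: "LqN q n f \<Longrightarrow> (f :: 'a poly) \<in> LQ"
  by (auto simp: LqN_def Lq_def)

lemma LqN_qdeg: "LqN q n f \<Longrightarrow> (f :: 'a poly) = 0 \<or> qdeg q f < n"
proof (cases "f = 0")
  case False
  assume "LqN q n f"
  moreover have "coeff f (degree f) \<noteq> 0" using False by simp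
  ultimately obtain j where "j < n" "degree f = q^j" unfolding LqN_def by blast
  thus ?thesis using qdeg_eqI by auto
qed simp

end



context fq begin

lemma power_card_same: "(x::'a) ^ card (UNIV :: 'a set) = x"
proof (cases "x = 0")
  case False
  have "x * (\<Prod>y\<in>UNIV-{0}. x * y) = x * x ^ (card (UNIV :: 'a set) - 1) * \<Prod>(UNIV-{0})"
    by (simp add: prod.distrib mult_ac)
  also have "x * x ^ (card (UNIV :: 'a set) - 1) = x ^ Suc (card (UNIV :: 'a set) - 1)"
    by (subst power_Suc) auto
  also have "Suc (card (UNIV :: 'a set) - 1) = card (UNIV :: 'a set)"
    using finite_UNIV_card_ge_0[where ?'a = 'a] by simp
  also have "(\<Prod>y\<in>UNIV-{0}. x * y) = (\<Prod>y\<in>UNIV-{0}. y)"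
    by (rule prod.reindex_bij_witness[of _ "\<lambda>y. y / x" "\<lambda>y. x * y"]) (use False in auto)
  finally show ?thesis
    by simp
qed (use finite_UNIV_card_ge_0[where ?'a = 'a] in auto)

lemma frob_poly_minus: "(x - y :: 'a poly)^(q^i) = x^(q^i) - y^(q^i)"
proof -
  have "y^(q^i) + (-y)^(q^i) = 0" using frob_poly[of y "-y" i] by (simp add: power_0_left)
  hence "(-y)^(q^i) = - (y^(q^i))" by (simp add: eq_neg_iff_add_eq_0 add.commute)
  thus ?thesis using frob_poly[of x "-y" i] by simp
qed

definition fX :: "'a poly" where "fX = monom 1 q - [:0, 1:]"

lemma poly_fX: "poly fX x = x ^ q - x"
  by (simp add: fX_def poly_monom)

lemma coeff_X: "coeff [:0, 1::'a:] i = (if i = 1 then 1 else 0)"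
  by (cases i) (auto simp: coeff_pCons split: nat.splits)

lemma degree_fX: "degree fX = q" and fX0: "fX \<noteq> 0"
proof -
  have "coeff fX q = 1" using q_ge2 by (simp add: fX_def coeff_X)
  moreover have "degree fX \<le> q" unfolding fX_def
    using degree_monom_le[of "1::'a" q] q_ge2 by (intro degree_diff_le) auto
  ultimately show "degree fX = q" by (metis le_antisym le_degree one_neq_zero)
  thus "fX \<noteq> 0" using q_ge2 by auto
qed

lemma roots_fX: "{x. poly fX x = 0} = (Fq q :: 'a set)"
  by (auto simp: poly_fX Fq_def)

lemma fX_dvd: "fX dvd (monom 1 (q^i) - [:0, 1:])"
proof (induction i)
  case 0 then show ?case by (simp add: monom_Suc monom_0)
next
  case (Suc i)
  have "monom 1 (q^Suc i) - [:0, 1::'a:] = (monom 1 (q^i) - [:0, 1:])^(q^1) + fX"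
  proof -
    have "(monom 1 (q^i) - [:0, 1::'a:])^(q^1) = monom 1 (q^i) ^ q - [:0, 1:] ^ q"
      using frob_poly_minus[of "monom 1 (q^i)" "[:0,1:]" 1] by simp
    also have "monom 1 (q^i) ^ q = monom (1::'a) (q^Suc i)"
      by (simp add: monom_power mult.commute)
    also have "[:0, 1::'a:] ^ q = monom 1 q" by (simp add: monom_altdef)
    finally show ?thesis by (simp add: fX_def)
  qed
  moreover have "fX dvd (monom 1 (q^i) - [:0, 1:])^(q^1)"
  proof -
    have "(monom 1 (q^i) - [:0, 1::'a:]) dvd (monom 1 (q^i) - [:0, 1:])^(q^1)"
      by (rule dvd_power) simp
    thus ?thesis using Suc dvd_trans by blast
  qed
  ultimately show ?case by simp
qed

lemma card_Fq: "card (Fq q :: 'a set) = q"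
proof -
  obtain m where m: "m \<ge> 1" "card (UNIV :: 'a set) = q^m" using qcard by blast
  define T where "T = q^m"
  have "q^1 \<le> q^m" using m q_ge2 by (intro power_increasing) auto
  hence qT: "q \<le> T" by (simp add: T_def)
  define G :: "'a poly" where "G = monom 1 T - [:0, 1:]"
  obtain h where h: "G = fX * h" using fX_dvd[of m] by (auto simp: G_def T_def dvd_def)
  have T2: "T \<ge> 2" using qT q_ge2 by simp
  have "coeff G T = 1" using T2 by (simp add: G_def coeff_X)
  hence G0: "G \<noteq> 0" by auto
  have dG: "degree G = T"
  proof -
    have "degree G \<le> T" unfolding G_def
      using degree_monom_le[of "1::'a" T] T2 by (intro degree_diff_le) auto
    moreover have "T \<le> degree G" by (rule le_degree) (simp add: \<open>coeff G T = 1\<close>)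
    ultimately show ?thesis by (rule antisym)
  qed
  have h0: "h \<noteq> 0" using G0 h by auto
  have dh: "degree h = T - q" using dG h fX0 h0 degree_fX by (simp add: degree_mult_eq)
  have "UNIV \<subseteq> {x. poly fX x = 0} \<union> {x. poly h x = 0}"
  proof
    fix x :: 'a
    have "x ^ T = x" using power_card_same[of x] m(2) by (simp add: T_def)
    hence "poly G x = 0" by (simp add: G_def poly_monom)
    thus "x \<in> {x. poly fX x = 0} \<union> {x. poly h x = 0}" by (simp add: h)
  qed
  hence "card (UNIV :: 'a set) \<le> card ({x. poly fX x = 0} \<union> {x. poly h x = 0})"
    by (intro card_mono) simp_all
  hence "T \<le> card ({x. poly fX x = 0} \<union> {x. poly h x = 0})"
    using m(2) by (simp add: T_def)
  also have "\<dots> \<le> card {x. poly fX x = 0} + card {x. poly h x = 0}" by (rule card_Un_le)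
  also have "card {x. poly h x = 0} \<le> T - q" using card_poly_roots_bound[OF h0] dh by simp
  finally have "q \<le> card {x. poly fX x = 0}" using qT by linarith
  moreover have "card {x. poly fX x = 0} \<le> q" using card_poly_roots_bound[OF fX0] degree_fX by simp
  ultimately show ?thesis using roots_fX by simp
qed

lemma fX_prod: "fX = (\<Prod>c\<in>Fq q. [:-c, 1:])"
proof -
  define F where "F = (\<Prod>c\<in>(Fq q :: 'a set). [:-c, 1:])"
  have dF: "degree F = q" unfolding F_def
    by (subst degree_prod_eq_sum_degree) (auto simp: card_Fq)
  have lF: "lead_coeff F = 1" unfolding F_def by (simp add: lead_coeff_prod)
  have "coeff (fX - F) q = 0" using lF dF q_ge2 by (simp add: fX_def coeff_X)
  moreover have "degree (fX - F) \<le> q" using dF degree_fX by (simp add: degree_diff_le)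
  ultimately have d: "fX - F = 0 \<or> degree (fX - F) < q"
    by (metis le_neq_implies_less leading_coeff_0_iff)
  have roots: "Fq q \<subseteq> {x. poly (fX - F) x = 0}"
  proof
    fix x assume x: "(x::'a) \<in> Fq q"
    have "poly fX x = 0" using x roots_fX by auto
    moreover have "poly F x = 0" unfolding F_def poly_prod using x
      by (subst prod_zero_iff) auto
    ultimately show "x \<in> {x. poly (fX - F) x = 0}" by simp
  qed
  have "fX - F = 0"
  proof (rule ccontr)
    assume ne: "fX - F \<noteq> 0"
    hence "card {x. poly (fX - F) x = 0} < q" using card_poly_roots_bound[OF ne] d by simp
    moreover have "q \<le> card {x. poly (fX - F) x = 0}"
      using card_mono[OF _ roots] card_Fq by simp
    ultimately show False by simp
  qed
  thus ?thesis by (simp add: F_def)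
qed

lemma prod_Fq_shift: "(\<Prod>c\<in>Fq q. W - [:c:]) = W ^ q - (W :: 'a poly)"
proof -
  have "pcompose fX W = W ^ q - W" by (simp add: fX_def pcompose_diff pcompose_monom pcompose_pCons)
  moreover have "pcompose fX W = (\<Prod>c\<in>Fq q. W - [:c:])"
  proof -
    have "pcompose fX W = (\<Prod>c\<in>Fq q. [:-c:] + W)"
      by (subst fX_prod) (simp add: pcompose_prod pcompose_pCons)
    also have "\<dots> = (\<Prod>c\<in>Fq q. W - [:c:])"
      by (rule prod.cong) (simp_all add: poly_eq_iff coeff_pCons split: nat.split)
    finally show ?thesis .
  qed
  ultimately show ?thesis by simp
qed

lemma prod_Fq_Lq:
  assumes "Y \<in> LQ"
  shows "(\<Prod>c\<in>Fq q. Y - [:c * z:]) \<in> LQ"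
proof (cases "z = 0")
  case True
  hence "(\<Prod>c\<in>Fq q. Y - [:c * z:]) = Y ^ (q^1)" by (simp add: card_Fq)
  thus ?thesis using Lq_power[OF assms, of 1] by simp
next
  case False
  define W where "W = smult (1 / z) Y"
  have "Y - [:c * z:] = [:z:] * (W - [:c:])" for c using False
    by (simp add: W_def algebra_simps smult_add_right)
  hence "(\<Prod>c\<in>Fq q. Y - [:c * z:]) = (\<Prod>c\<in>Fq q. [:z:] * (W - [:c:]))" by simp
  also have "\<dots> = [:z:] ^ q * (W ^ q - W)"
    unfolding prod.distrib prod_constant prod_Fq_shift card_Fq ..
  also have "\<dots> = smult (z ^ q) (W ^ (q^1) - W)"
  proof -
    have "[:z:] ^ n = [:z ^ n:]" for n by (induction n) (simp_all add: one_pCons)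
    thus ?thesis by simp
  qed
  finally show ?thesis using Lq_power[of W 1] assms by (simp add: W_def)
qed


lemma lin_indep_prefix:
  assumes "lin_indep_Fq q n (g :: nat \<Rightarrow> 'a)" "s \<le> n"
  shows "lin_indep_Fq q s g"
  unfolding lin_indep_Fq_def
proof (rule allI, intro impI)
  fix c :: "nat \<Rightarrow> 'a"
  assume c: "\<forall>i<s. c i \<in> Fq q" "(\<Sum>i<s. c i * g i) = 0"
  define c' where "c' i = (if i < s then c i else 0)" for i
  have "\<forall>i<n. c' i \<in> Fq q" using c(1) Fq_0 by (simp add: c'_def)
  moreover have "(\<Sum>i<n. c' i * g i) = (\<Sum>i<s. c' i * g i)"
    using assms(2) by (intro sum.mono_neutral_right) (auto simp: c'_def)
  hence "(\<Sum>i<n. c' i * g i) = 0" using c(2) by (simp add: c'_def)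
  ultimately have "\<forall>i<n. c' i = 0" using assms(1) unfolding lin_indep_Fq_def by blast
  show "\<forall>i<s. c i = 0"
  proof (intro allI impI)
    fix i assume i: "i < s"
    hence "c' i = 0" using \<open>\<forall>i<n. c' i = 0\<close> assms(2) by simp
    thus "c i = 0" using i by (simp add: c'_def)
  qed
qed

lemma span_0: "span_Fq q 0 (g :: nat \<Rightarrow> 'a) = {0}"
  by (auto simp: span_Fq_def)

lemma span_Suc: "span_Fq q (Suc s) (g :: nat \<Rightarrow> 'a) =
    (\<Union>c\<in>Fq q. (\<lambda>v. v + c * g s) ` span_Fq q s g)"
proof
  show "span_Fq q (Suc s) g \<subseteq> (\<Union>c\<in>Fq q. (\<lambda>v. v + c * g s) ` span_Fq q s g)"
  proof
    fix x assume "x \<in> span_Fq q (Suc s) g"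
    then obtain c where c: "\<forall>i<Suc s. c i \<in> Fq q" "x = (\<Sum>i<Suc s. c i * g i)"
      unfolding span_Fq_def by blast
    have "(\<Sum>i<s. c i * g i) \<in> span_Fq q s g" using c(1) unfolding span_Fq_def by auto
    moreover have "x = (\<Sum>i<s. c i * g i) + c s * g s" using c(2) by simp
    ultimately show "x \<in> (\<Union>c\<in>Fq q. (\<lambda>v. v + c * g s) ` span_Fq q s g)" using c(1) by blast
  qed
next
  show "(\<Union>c\<in>Fq q. (\<lambda>v. v + c * g s) ` span_Fq q s g) \<subseteq> span_Fq q (Suc s) g"
  proof
    fix x assume "x \<in> (\<Union>c\<in>Fq q. (\<lambda>v. v + c * g s) ` span_Fq q s g)"
    then obtain c v where cv: "c \<in> Fq q" "v \<in> span_Fq q s g" "x = v + c * g s" by blast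
    then obtain d where d: "\<forall>i<s. d i \<in> Fq q" "v = (\<Sum>i<s. d i * g i)"
      unfolding span_Fq_def by blast
    define d' where "d' = d(s := c)"
    have dF: "\<forall>i<Suc s. d' i \<in> Fq q" using d(1) cv(1) by (auto simp: d'_def less_Suc_eq)
    have "(\<Sum>i<Suc s. d' i * g i) = (\<Sum>i<s. d i * g i) + c * g s"
      by (simp add: d'_def)
    hence "x = (\<Sum>i<Suc s. d' i * g i)" using cv(3) d(2) by simp
    thus "x \<in> span_Fq q (Suc s) g" using dF unfolding span_Fq_def by blast
  qed
qed

lemma span_disj:
  assumes li: "lin_indep_Fq q (Suc s) (g :: nat \<Rightarrow> 'a)" and c: "c \<in> Fq q" "c' \<in> Fq q" "c \<noteq> c'"
  shows "(\<lambda>v. v + c * g s) ` span_Fq q s g \<inter> (\<lambda>v. v + c' * g s) ` span_Fq q s g = {}"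
proof (rule ccontr)
  assume "(\<lambda>v. v + c * g s) ` span_Fq q s g \<inter> (\<lambda>v. v + c' * g s) ` span_Fq q s g \<noteq> {}"
  then obtain v v' where vv: "v \<in> span_Fq q s g" "v' \<in> span_Fq q s g" "v + c * g s = v' + c' * g s"
    by blast
  obtain d where d: "\<forall>i<s. d i \<in> Fq q" "v = (\<Sum>i<s. d i * g i)" using vv(1) unfolding span_Fq_def by blast
  obtain d' where d': "\<forall>i<s. d' i \<in> Fq q" "v' = (\<Sum>i<s. d' i * g i)" using vv(2) unfolding span_Fq_def by blast
  define e where "e i = (if i < s then d i - d' i else c - c')" for i
  have "\<forall>i<Suc s. e i \<in> Fq q" using d(1) d'(1) c by (auto simp: e_def less_Suc_eq Fq_diff)
  moreover have "(\<Sum>i<Suc s. e i * g i) = (v - v') + (c - c') * g s"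
    by (simp add: e_def d(2) d'(2) sum_subtractf algebra_simps)
  hence "(\<Sum>i<Suc s. e i * g i) = 0" using vv(3) by (simp add: algebra_simps)
  ultimately have "e s = 0" using li unfolding lin_indep_Fq_def by blast
  thus False using c by (simp add: e_def)
qed

lemma Pi_Suc:
  assumes li: "lin_indep_Fq q (Suc s) (g :: nat \<Rightarrow> 'a)"
  shows "Pi_g q (Suc s) g = (\<Prod>c\<in>Fq q. \<Prod>v\<in>span_Fq q s g. [:-(v + c * g s), 1:])"
proof -
  have "Pi_g q (Suc s) g = (\<Prod>u\<in>(\<Union>c\<in>Fq q. (\<lambda>v. v + c * g s) ` span_Fq q s g). [:-u, 1:])"
    by (simp add: Pi_g_def span_Suc)
  also have "\<dots> = (\<Prod>c\<in>Fq q. \<Prod>u\<in>(\<lambda>v. v + c * g s) ` span_Fq q s g. [:-u, 1:])"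
  proof (rule prod.UNION_disjoint)
    show "\<forall>i\<in>Fq q. \<forall>j\<in>Fq q. i \<noteq> j \<longrightarrow>
        (\<lambda>v. v + i * g s) ` span_Fq q s g \<inter> (\<lambda>v. v + j * g s) ` span_Fq q s g = {}"
      using span_disj[OF li] by blast
  qed simp_all
  also have "\<dots> = (\<Prod>c\<in>Fq q. \<Prod>v\<in>span_Fq q s g. [:-(v + c * g s), 1:])"
  proof (rule prod.cong[OF refl])
    fix c
    show "(\<Prod>u\<in>(\<lambda>v. v + c * g s) ` span_Fq q s g. [:-u, 1:]) = (\<Prod>v\<in>span_Fq q s g. [:-(v + c * g s), 1:])"
      by (subst prod.reindex) (auto simp: inj_on_def)
  qed
  finally show ?thesis .
qed

lemma pcompose_shift:
  assumes "Y \<in> LQ"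
  shows "pcompose Y [:-a, 1:] = Y + [:poly Y (-a):]"
proof -
  have "[:-a, 1:] = [:0, 1:] + [:-a:]" by simp
  hence "pcompose Y [:-a, 1:] = pcompose Y [:0, 1:] + pcompose Y [:-a:]"
    using pcompose_Lq_add[OF assms] by metis
  thus ?thesis by (simp add: pcompose_pCons_0)
qed

lemma Pi_Lq:
  assumes li: "lin_indep_Fq q n (g :: nat \<Rightarrow> 'a)"
  shows "s \<le> n \<Longrightarrow> Pi_g q s g \<in> LQ"
proof (induction s)
  case 0
  then show ?case by (simp add: Pi_g_def span_0)
next
  case (Suc s)
  define Y where "Y = Pi_g q s g"
  define z where "z = poly Y (g s)"
  have Y: "Y \<in> LQ" using Suc by (simp add: Y_def)
  have li': "lin_indep_Fq q (Suc s) g" using lin_indep_prefix[OF li Suc.prems] .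
  have "(\<Prod>v\<in>span_Fq q s g. [:-(v + c * g s), 1:]) = Y - [:c * z:]" if c: "c \<in> Fq q" for c
  proof -
    have "(\<Prod>v\<in>span_Fq q s g. [:-(v + c * g s), 1:]) = pcompose Y [:-(c * g s), 1:]"
      by (simp add: Y_def Pi_g_def pcompose_prod pcompose_pCons algebra_simps)
    also have "\<dots> = Y + [:poly Y (- (c * g s)):]" by (rule pcompose_shift[OF Y])
    also have "poly Y (- (c * g s)) = - (c * z)"
      by (simp add: poly_Lq_uminus[OF Y] poly_Lq_Fq[OF Y c] z_def)
    finally show ?thesis by simp
  qed
  hence "Pi_g q (Suc s) g = (\<Prod>c\<in>Fq q. Y - [:c * z:])"
    by (simp add: Pi_Suc[OF li'])
  thus ?case using prod_Fq_Lq[OF Y] by simp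
qed

lemma card_span:
  assumes li: "lin_indep_Fq q n (g :: nat \<Rightarrow> 'a)"
  shows "s \<le> n \<Longrightarrow> card (span_Fq q s g) = q ^ s"
proof (induction s)
  case 0
  then show ?case by (simp add: span_0)
next
  case (Suc s)
  have li': "lin_indep_Fq q (Suc s) g" using lin_indep_prefix[OF li Suc.prems] .
  have "card (span_Fq q (Suc s) g) = (\<Sum>c\<in>Fq q. card ((\<lambda>v. v + c * g s) ` span_Fq q s g))"
    unfolding span_Suc
  proof (rule card_UN_disjoint)
    show "\<forall>i\<in>Fq q. \<forall>j\<in>Fq q. i \<noteq> j \<longrightarrow>
        (\<lambda>v. v + i * g s) ` span_Fq q s g \<inter> (\<lambda>v. v + j * g s) ` span_Fq q s g = {}"
      using span_disj[OF li'] by blast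
  qed simp_all
  also have "\<dots> = (\<Sum>c\<in>(Fq q :: 'a set). card (span_Fq q s g))"
  proof -
    have "card ((\<lambda>v. v + c * g s) ` span_Fq q s g) = card (span_Fq q s g)" for c
      by (rule card_image) (auto simp: inj_on_def)
    thus ?thesis by simp
  qed
  also have "\<dots> = q ^ Suc s" using Suc by (simp add: card_Fq)
  finally show ?case .
qed

lemma Pi_props:
  assumes li: "lin_indep_Fq q n (g :: nat \<Rightarrow> 'a)"
  shows "Pi_g q n g \<in> LQ" "Pi_g q n g \<noteq> 0" "qdeg q (Pi_g q n g) = n"
proof -
  show "Pi_g q n g \<in> LQ" using Pi_Lq[OF li] by simp
  show "Pi_g q n g \<noteq> 0" by (simp add: Pi_g_def)
  have "degree (Pi_g q n g) = card (span_Fq q n g)"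
    unfolding Pi_g_def by (subst degree_prod_eq_sum_degree) auto
  thus "qdeg q (Pi_g q n g) = n" using card_span[OF li] qdeg_eqI by simp
qed

end


theorem theorem24:
  fixes q m n k :: nat and g r :: "nat \<Rightarrow> 'a::{finite, field}"
  assumes "\<exists>p e. prime p \<and> e \<ge> 1 \<and> q = p ^ e"
    and "m \<ge> 1"
    and "card (UNIV :: 'a set) = q ^ m"
    and "1 \<le> k" and "k \<le> n"
    and "lin_indep_Fq q n g"
  shows "\<exists>b1 b2. algorithm2 q k (Pi_g q n g) (Lambda_gr q n g r) = Some (b1, b2) \<and>
           minimal_basis q k {b1, b2} (interp_module q n g r) \<and>
           lpos q k b1 = 1 \<and> lpos q k b2 = 2"
proof -
  obtain p e where p: "prime p" "e \<ge> 1" "q = p ^ e" using assms(1) by blast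
  have cpos: "CHAR('a) > 0" by (rule finite_imp_CHAR_pos) simp
  hence cprime: "prime CHAR('a)" using prime_CHAR_semidom by blast
  have "CHAR('a) dvd card (UNIV :: 'a set)" by (rule my_CHAR_dvd_card)
  hence "CHAR('a) dvd p ^ (e * m)" using assms(3) p(3) by (simp add: power_mult)
  hence "CHAR('a) dvd p" using cprime prime_dvd_power by blast
  hence CH: "CHAR('a) = p" using cprime p(1) primes_dvd_imp_eq by blast
  interpret fq q "TYPE('a)"
    by unfold_locales (use p CH assms(2,3) in auto)
  note PP = Pi_props[OF assms(6)]
  have LL: "Lambda_gr q n g r \<in> Lq q" using LqN_Lq[OF Lambda_LqN] .
  have Ld: "Lambda_gr q n g r = 0 \<or> qdeg q (Lambda_gr q n g r) < qdeg q (Pi_g q n g)"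
    using LqN_qdeg[OF Lambda_LqN[of q n g r]] PP(3) by simp
  have M: "interp_module q n g r = Sgen q (Pi_g q n g, 0) (- Lambda_gr q n g r, [:0, 1:])"
    by (simp add: interp_module_def Sgen_def)
  show ?thesis using alg2_main[OF assms(4) PP(1) PP(2) LL Ld] M by simp
qed

end
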